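(* Let $G=(V,E)$ be a finite, simple, connected graph on $n=n(G)$ vertices with maximum degree $\Delta\ge 2$. Then $Z(G)\le \frac{(\Delta-2)n+2}{\Delta-1}$, and if equality $Z(G)=\frac{(\Delta-2)n+2}{\Delta-1}$ holds, then $G$ is regular.
   Context: All graphs are finite, simple and undirected. A set $S\subseteq V$ is a zero forcing set of $G$ if the following process colors every vertex: initially the vertices of $S$ are colored and all others uncolored; repeatedly, whenever a colored vertex has at most one uncolored neighbor, that neighbor becomes colored. The zero forcing number $Z(G)$ is the minimum cardinality of a zero forcing set of $G$. *)

theory Defs
  imports Complex_Main
begin

definition simple_graph :: "'a set \<Rightarrow> ('a \<Rightarrow> 'a \<Rightarrow> bool) \<Rightarrow> bool" where
  "simple_graph V E \<longleftrightarrow> finite V \<and> (\<forall>u v. E u v \<longrightarrow> u \<in> V \<and> v \<in> V)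
     \<and> (\<forall>u v. E u v \<longrightarrow> E v u) \<and> (\<forall>u. \<not> E u u)"

definition neighbors :: "'a set \<Rightarrow> ('a \<Rightarrow> 'a \<Rightarrow> bool) \<Rightarrow> 'a \<Rightarrow> 'a set" where
  "neighbors V E u = {v \<in> V. E u v}"

definition degree :: "'a set \<Rightarrow> ('a \<Rightarrow> 'a \<Rightarrow> bool) \<Rightarrow> 'a \<Rightarrow> nat" where
  "degree V E u = card (neighbors V E u)"

definition max_degree :: "'a set \<Rightarrow> ('a \<Rightarrow> 'a \<Rightarrow> bool) \<Rightarrow> nat" where
  "max_degree V E = Max (degree V E ` V)"

definition regular :: "'a set \<Rightarrow> ('a \<Rightarrow> 'a \<Rightarrow> bool) \<Rightarrow> bool" where
  "regular V E \<longleftrightarrow> (\<exists>k. \<forall>v \<in> V. degree V E v = k)"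

definition connected_graph :: "'a set \<Rightarrow> ('a \<Rightarrow> 'a \<Rightarrow> bool) \<Rightarrow> bool" where
  "connected_graph V E \<longleftrightarrow> V \<noteq> {} \<and>
     (\<forall>u \<in> V. \<forall>v \<in> V. (u, v) \<in> ({(x, y). x \<in> V \<and> y \<in> V \<and> E x y})\<^sup>*)"

inductive_set forced_closure :: "'a set \<Rightarrow> ('a \<Rightarrow> 'a \<Rightarrow> bool) \<Rightarrow> 'a set \<Rightarrow> 'a set"
  for V E S where
  init: "x \<in> S \<Longrightarrow> x \<in> forced_closure V E S"
| force: "\<lbrakk> u \<in> forced_closure V E S; v \<in> neighbors V E u;
           \<forall>w \<in> neighbors V E u. w \<noteq> v \<longrightarrow> w \<in> forced_closure V E S \<rbrakk>
         \<Longrightarrow> v \<in> forced_closure V E S"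

definition zero_forcing_set :: "'a set \<Rightarrow> ('a \<Rightarrow> 'a \<Rightarrow> bool) \<Rightarrow> 'a set \<Rightarrow> bool" where
  "zero_forcing_set V E S \<longleftrightarrow> S \<subseteq> V \<and> V \<subseteq> forced_closure V E S"

definition zero_forcing_number :: "'a set \<Rightarrow> ('a \<Rightarrow> 'a \<Rightarrow> bool) \<Rightarrow> nat" where
  "zero_forcing_number V E = Min (card ` {S. zero_forcing_set V E S})"

end

theory Submission
  imports Defs
begin

lemma cross_edge:
  assumes "(a,b) \<in> R\<^sup>*" "a \<in> C" "b \<notin> C"
  shows "\<exists>u w. u \<in> C \<and> w \<notin> C \<and> (u,w) \<in> R"
  using assms by (induction rule: rtrancl_induct) auto

lemma deg_le_max:
  assumes "simple_graph V E" "u \<in> V"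
  shows "degree V E u \<le> max_degree V E"
  using assms unfolding max_degree_def simple_graph_def by auto

lemma grow:
  assumes sg: "simple_graph V E" and conn: "connected_graph V E"
  shows "C \<subseteq> V \<Longrightarrow> C \<noteq> {} \<Longrightarrow> (\<forall>x\<in>C. \<exists>y\<in>C. E x y) \<Longrightarrow>
    \<exists>T. T \<subseteq> V - C \<and> card (V - C) \<le> (card (V - C) - card T) * (max_degree V E - 1)
      \<and> (\<forall>X. C \<subseteq> forced_closure V E X \<longrightarrow> T \<subseteq> X \<longrightarrow> V \<subseteq> forced_closure V E X)"
proof (induction "card (V - C)" arbitrary: C rule: less_induct)
  case less
  have finV: "finite V" using sg unfolding simple_graph_def by auto
  show ?case
  proof (cases "C = V")
    case True
    then show ?thesis by (intro exI[of _ "{}"]) auto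
  next
    case False
    then obtain x where x: "x \<in> V" "x \<notin> C" using less.prems by auto
    obtain c where c: "c \<in> C" using less.prems by auto
    have "(c, x) \<in> ({(x, y). x \<in> V \<and> y \<in> V \<and> E x y})\<^sup>*"
      using conn c x less.prems unfolding connected_graph_def by auto
    from cross_edge[OF this c x(2)] obtain u w where uw: "u \<in> C" "w \<notin> C" "u \<in> V" "w \<in> V" "E u w"
      by auto
    define N where "N = neighbors V E u - C"
    have wN: "w \<in> N" using uw unfolding N_def neighbors_def by auto
    have finN: "finite N" using finV unfolding N_def neighbors_def by auto
    define C' where "C' = C \<union> N"
    have NV: "N \<subseteq> V - C" unfolding N_def neighbors_def by auto
    have sub: "V - C' \<subset> V - C" using wN NV unfolding C'_def by auto
    have lt: "card (V - C') < card (V - C)"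
      using psubset_card_mono[OF _ sub] finV by auto
    have inv: "\<forall>x\<in>C'. \<exists>y\<in>C'. E x y"
    proof
      fix z assume "z \<in> C'"
      then have "z \<in> C \<or> z \<in> N" unfolding C'_def by auto
      then show "\<exists>y\<in>C'. E z y"
      proof
        assume "z \<in> C" then show ?thesis using less.prems(3) unfolding C'_def by auto
      next
        assume "z \<in> N" then have "E u z" unfolding N_def neighbors_def by auto
        then have "E z u" using sg unfolding simple_graph_def by auto
        then show ?thesis using uw unfolding C'_def by auto
      qed
    qed
    have C'V: "C' \<subseteq> V" "C' \<noteq> {}" using less.prems NV unfolding C'_def by auto
    from less.hyps[OF lt C'V inv] obtain T' where T':
      "T' \<subseteq> V - C'" "card (V - C') \<le> (card (V - C') - card T') * (max_degree V E - 1)"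
      "\<forall>X. C' \<subseteq> forced_closure V E X \<longrightarrow> T' \<subseteq> X \<longrightarrow> V \<subseteq> forced_closure V E X"
      by blast
    define T where "T = T' \<union> (N - {w})"
    have TV: "T \<subseteq> V - C" using T'(1) NV unfolding T_def C'_def by auto
    have disj: "T' \<inter> (N - {w}) = {}" using T'(1) unfolding C'_def by auto
    have finT': "finite T'" using T'(1) finV finite_subset by blast
    have cT: "card T = card T' + (card N - 1)"
      unfolding T_def using card_Un_disjoint[OF finT' _ disj] finN wN by auto
    have "V - C = (V - C') \<union> N" using NV unfolding C'_def by auto
    moreover have "(V - C') \<inter> N = {}" unfolding C'_def by auto
    ultimately have cVC: "card (V - C) = card (V - C') + card N"
      using card_Un_disjoint[of "V - C'" N] finV finN by simp
    have t'm': "card T' \<le> card (V - C')" using T'(1) finV by (simp add: card_mono)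
    have k1: "card N \<ge> 1" using wN finN by (metis One_nat_def Suc_leI card_gt_0_iff empty_iff)
    obtain y where y: "y \<in> C" "E u y" using less.prems(3) uw by auto
    have yV: "y \<in> V" using y less.prems by auto
    have "N \<subset> neighbors V E u" using y yV unfolding N_def neighbors_def by auto
    moreover have "finite (neighbors V E u)" using finV unfolding neighbors_def by auto
    ultimately have "card N < degree V E u" unfolding degree_def
      using psubset_card_mono by blast
    moreover have "degree V E u \<le> max_degree V E" using deg_le_max[OF sg uw(3)] .
    ultimately have kD: "card N \<le> max_degree V E - 1" by linarith
    have eq: "card (V - C) - card T = (card (V - C') - card T') + 1"
      using cT cVC t'm' k1 by arith
    have arith: "card (V - C) \<le> (card (V - C) - card T) * (max_degree V E - 1)"
      unfolding eq using T'(2) kD cVC by (simp add: distrib_right)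
    have cl: "\<forall>X. C \<subseteq> forced_closure V E X \<longrightarrow> T \<subseteq> X \<longrightarrow> V \<subseteq> forced_closure V E X"
    proof (intro allI impI)
      fix X assume X: "C \<subseteq> forced_closure V E X" "T \<subseteq> X"
      have NX: "N - {w} \<subseteq> forced_closure V E X"
        using X(2) unfolding T_def by (auto intro: forced_closure.init)
      have "w \<in> forced_closure V E X"
      proof (rule forced_closure.force)
        show "u \<in> forced_closure V E X" using X uw by auto
        show "w \<in> neighbors V E u" using wN unfolding N_def by auto
        show "\<forall>z\<in>neighbors V E u. z \<noteq> w \<longrightarrow> z \<in> forced_closure V E X"
          using NX X(1) unfolding N_def by auto
      qed
      then have "C' \<subseteq> forced_closure V E X" using NX X(1) unfolding C'_def by auto
      moreover have "T' \<subseteq> X" using X(2) unfolding T_def by auto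
      ultimately show "V \<subseteq> forced_closure V E X" using T'(3) by blast
    qed
    show ?thesis using TV arith cl by blast
  qed
qed

lemma construct:
  assumes sg: "simple_graph V E" and conn: "connected_graph V E"
    and v0: "v0 \<in> V" and d1: "degree V E v0 \<ge> 1"
  shows "\<exists>S. zero_forcing_set V E S \<and> card S \<le> card V \<and>
     card V + (max_degree V E - 1) \<le> (card V - card S) * (max_degree V E - 1) + degree V E v0 + 1"
proof -
  have finV: "finite V" using sg unfolding simple_graph_def by auto
  define N0 where "N0 = neighbors V E v0"
  have finN0: "finite N0" using finV unfolding N0_def neighbors_def by auto
  have cN0: "card N0 = degree V E v0" unfolding N0_def degree_def by simp
  then obtain w0 where w0: "w0 \<in> N0" using d1 by (metis card.empty ex_in_conv not_one_le_zero)
  have v0N0: "v0 \<notin> N0" using sg unfolding N0_def neighbors_def simple_graph_def by auto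
  define C0 where "C0 = insert v0 N0"
  have C0V: "C0 \<subseteq> V" "C0 \<noteq> {}" using v0 unfolding C0_def N0_def neighbors_def by auto
  have inv: "\<forall>x\<in>C0. \<exists>y\<in>C0. E x y"
  proof
    fix z assume "z \<in> C0"
    then have "z = v0 \<or> z \<in> N0" unfolding C0_def by auto
    then show "\<exists>y\<in>C0. E z y"
    proof
      assume "z = v0" then show ?thesis using w0 unfolding C0_def N0_def neighbors_def by auto
    next
      assume "z \<in> N0" then have "E v0 z" unfolding N0_def neighbors_def by auto
      then have "E z v0" using sg unfolding simple_graph_def by auto
      then show ?thesis unfolding C0_def by auto
    qed
  qed
  from grow[OF sg conn C0V inv] obtain T' where T':
      "T' \<subseteq> V - C0" "card (V - C0) \<le> (card (V - C0) - card T') * (max_degree V E - 1)"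
      "\<forall>X. C0 \<subseteq> forced_closure V E X \<longrightarrow> T' \<subseteq> X \<longrightarrow> V \<subseteq> forced_closure V E X"
    by blast
  define S where "S = T' \<union> insert v0 (N0 - {w0})"
  have SV: "S \<subseteq> V" using T'(1) C0V unfolding S_def C0_def by auto
  have "C0 \<subseteq> forced_closure V E S"
  proof -
    have A: "insert v0 (N0 - {w0}) \<subseteq> forced_closure V E S"
      unfolding S_def by (auto intro: forced_closure.init)
    have "w0 \<in> forced_closure V E S"
    proof (rule forced_closure.force)
      show "v0 \<in> forced_closure V E S" using A by auto
      show "w0 \<in> neighbors V E v0" using w0 unfolding N0_def by auto
      show "\<forall>z\<in>neighbors V E v0. z \<noteq> w0 \<longrightarrow> z \<in> forced_closure V E S"
        using A unfolding N0_def by auto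
    qed
    then show ?thesis using A unfolding C0_def by auto
  qed
  then have zfs: "zero_forcing_set V E S" using T'(3) SV unfolding zero_forcing_set_def S_def by auto
  have finT': "finite T'" using T'(1) finV finite_subset by blast
  have cS: "card S \<le> card T' + degree V E v0"
  proof -
    have "card S \<le> card T' + card (insert v0 (N0 - {w0}))"
      unfolding S_def by (rule card_Un_le)
    moreover have "card (insert v0 (N0 - {w0})) = card N0"
      using finN0 v0N0 w0 by (simp add: card_insert_if) (metis One_nat_def Suc_pred card_gt_0_iff empty_iff)
    ultimately show ?thesis using cN0 by simp
  qed
  have cC0: "card C0 = degree V E v0 + 1" unfolding C0_def using finN0 v0N0 cN0 by simp
  have cVC0: "card (V - C0) = card V - card C0" using C0V finV by (simp add: card_Diff_subset finite_subset)
  have cC0le: "card C0 \<le> card V" using C0V finV card_mono by blast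
  have t'le: "card T' \<le> card (V - C0)" using T'(1) finV by (simp add: card_mono)
  have sle: "card S \<le> card V" using SV finV card_mono by blast
  define m where "m = card (V - C0)"
  define t where "t = card T'"
  define D where "D = max_degree V E - 1"
  have "card V - card S \<ge> (m - t) + 1" using cS cC0 cVC0 cC0le t'le unfolding m_def t_def by arith
  then have "(card V - card S) * D \<ge> ((m - t) + 1) * D" by (rule mult_right_mono) simp
  moreover have "m \<le> (m - t) * D" using T'(2) unfolding m_def t_def D_def .
  ultimately have "m + D \<le> (card V - card S) * D" by (simp add: distrib_right)
  moreover have "card V = m + degree V E v0 + 1" using cVC0 cC0 cC0le unfolding m_def by simp
  ultimately show ?thesis using zfs sle unfolding D_def by (intro exI[of _ S]) auto
qed

theorem mainTheorem5:
  fixes V :: "'a set" and E :: "'a \<Rightarrow> 'a \<Rightarrow> bool"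
  assumes "simple_graph V E"
    and "connected_graph V E"
    and "max_degree V E \<ge> 2"
  shows "real (zero_forcing_number V E)
           \<le> ((real (max_degree V E) - 2) * real (card V) + 2) / (real (max_degree V E) - 1)
       \<and> (real (zero_forcing_number V E)
           = ((real (max_degree V E) - 2) * real (card V) + 2) / (real (max_degree V E) - 1)
         \<longrightarrow> regular V E)"
proof -
  note sg = assms(1) and conn = assms(2)
  have finV: "finite V" using sg unfolding simple_graph_def by auto
  have Vne: "V \<noteq> {}" using conn unfolding connected_graph_def by auto
  define D where "D = max_degree V E"
  have "D \<in> degree V E ` V" unfolding D_def max_degree_def using finV Vne by simp
  then obtain z where z: "z \<in> V" "degree V E z = D" by auto
  have deg1: "degree V E v \<ge> 1" if v: "v \<in> V" for v
  proof -
    have "card (neighbors V E z) \<ge> 2" using z assms(3) unfolding degree_def D_def by simp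
    then have "\<not> neighbors V E z \<subseteq> {v}"
      by (metis card.empty card.insert empty_iff finite.emptyI not_less_eq_eq numeral_2_eq_2 subset_singletonD zero_le)
    then obtain y where y: "y \<in> V" "y \<noteq> v" unfolding neighbors_def by auto
    have "(v, y) \<in> ({(x, y). x \<in> V \<and> y \<in> V \<and> E x y})\<^sup>*"
      using conn v y unfolding connected_graph_def by auto
    then obtain a where "(v, a) \<in> {(x, y). x \<in> V \<and> y \<in> V \<and> E x y}"
      using y(2) by (metis converse_rtranclE)
    then have "a \<in> neighbors V E v" unfolding neighbors_def by auto
    moreover have "finite (neighbors V E v)" using finV unfolding neighbors_def by auto
    ultimately show ?thesis unfolding degree_def by (metis One_nat_def Suc_leI card_gt_0_iff empty_iff)
  qed
  have fin: "finite (card ` {S. zero_forcing_set V E S})"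
    by (rule finite_imageI, rule finite_subset[of _ "Pow V"]) (auto simp: zero_forcing_set_def finV)
  have Zle: "zero_forcing_number V E \<le> card S" if "zero_forcing_set V E S" for S
    unfolding zero_forcing_number_def using fin that by (intro Min_le) auto
  have bound: "real (zero_forcing_number V E) \<le> ((real D - 2) * real (card V) + 2) / (real D - 1)
     \<and> (degree V E v < D \<longrightarrow> real (zero_forcing_number V E) < ((real D - 2) * real (card V) + 2) / (real D - 1))"
    if v: "v \<in> V" for v
  proof -
    obtain S where S: "zero_forcing_set V E S" "card S \<le> card V"
      "card V + (D - 1) \<le> (card V - card S) * (D - 1) + degree V E v + 1"
      using construct[OF sg conn v deg1[OF v]] unfolding D_def by blast
    have dle: "degree V E v \<le> D" using deg_le_max[OF sg v] unfolding D_def .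
    have D2: "D \<ge> 2" using assms(3) unfolding D_def .
    have R: "real (card V) + (real D - 1) \<le> (real (card V) - real (card S)) * (real D - 1) + real (degree V E v) + 1"
    proof -
      have "real (card V + (D - 1)) \<le> real ((card V - card S) * (D - 1) + degree V E v + 1)"
        using S(3) by (rule of_nat_mono)
      moreover have "real (D - 1) = real D - 1" using D2 by (simp add: of_nat_diff)
      moreover have "real (card V - card S) = real (card V) - real (card S)" using S(2) by (simp add: of_nat_diff)
      ultimately show ?thesis by (simp only: of_nat_add of_nat_mult of_nat_1)
    qed
    have Z: "real (zero_forcing_number V E) \<le> real (card S)" using Zle[OF S(1)] by simp
    have pos: "real D - 1 > 0" using D2 by simp
    have "real (card S) * (real D - 1) \<le> (real D - 2) * real (card V) + 2"
      using R dle by (simp add: algebra_simps)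
    then have 1: "real (card S) \<le> ((real D - 2) * real (card V) + 2) / (real D - 1)"
      using pos by (simp add: pos_le_divide_eq)
    have 2: "real (card S) < ((real D - 2) * real (card V) + 2) / (real D - 1)" if "degree V E v < D"
    proof -
      have "real (degree V E v) \<le> real D - 1" using that by linarith
      then have "real (card S) * (real D - 1) < (real D - 2) * real (card V) + 2"
        using R by (simp add: algebra_simps)
      then show ?thesis using pos by (simp add: pos_less_divide_eq)
    qed
    show ?thesis using Z 1 2 by auto
  qed
  obtain v where v: "v \<in> V" using Vne by auto
  have part1: "real (zero_forcing_number V E) \<le> ((real D - 2) * real (card V) + 2) / (real D - 1)"
    using bound[OF v] by blast
  have part2: "regular V E" if eq: "real (zero_forcing_number V E) = ((real D - 2) * real (card V) + 2) / (real D - 1)"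
  proof (rule ccontr)
    assume "\<not> regular V E"
    then obtain u where u: "u \<in> V" "degree V E u \<noteq> D" unfolding regular_def by blast
    have "degree V E u < D" using deg_le_max[OF sg u(1)] u(2) unfolding D_def by simp
    then show False using bound[OF u(1)] eq by auto
  qed
  show ?thesis using part1 part2 unfolding D_def by blast
qed

end
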